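(* Let $\alpha\ge 1$ be a constant and let $n,m$ be integers with $\frac{2}{3}n\le m\le n-1$. For every instance (Bernoulli mean vector $\nu=(\mu_1,\dots,\mu_n)$ with unique best arm) and every order of the arms in the stream, the single-pass algorithm $\mathcal{A}_{\mathrm{large}}$ described below uses memory of $m$ arms and, for all sufficiently large $T$, has expected regret $$\mathbb{E}[R(T)] = O\!\left(\left(\frac{2\alpha}{e}\right)^{\frac{\alpha}{\alpha+1}}\frac{(n-m)\,T^{\frac{1}{\alpha+1}}}{n^{1+\frac{1}{\alpha+1}}}\sum_{i:\Delta_i>0}\Delta_i^{1-2\alpha}\right),$$ where the implied constant is absolute.
   Context: Streaming stochastic multi-armed bandit: $n$ arms arrive one by one in a stream (in an arbitrary fixed order); arm $i$ has Bernoulli rewards with mean $\mu_i\in[0,1]$. At most $m<n$ arms (and their statistics) can be stored in memory. In each of the $T$ rounds, the player may discard any stored arms and read any number of next arms from the stream into memory (subject to the memory limit), and then pulls exactly one arm $A_t$ currently in memory, observing its reward. An arm that has been discarded, or was passed over in the stream, can never be pulled again. Let $\mu_*=\max_i\mu_i$ (attained by a unique arm $\mathrm{arm}_*$), $\Delta_i=\mu_*-\mu_i$, and the expected regret $\mathbb{E}[R(T)]=\mathbb{E}\big[\sum_{t=1}^T(\mu_*-\mu_{A_t})\big]$. UCB denotes the standard Upper Confidence Bound algorithm (in round $t$ pull an arm maximizing $\hat\mu_i(t-1)+\sqrt{2\log(1/\delta)/T_i(t-1)}$, with unpulled arms having index $+\infty$), used as a black box with the property that when run on a fixed set of Bernoulli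 arms for $T$ rounds, every arm $i$ of the set with gap $\Delta_i>0$ relative to the best arm of the set is pulled at most $8\log T/\Delta_i^2$ times in expectation. Algorithm $\mathcal{A}_{\mathrm{large}}$ (input $T,m,n,\alpha$): set $L=\left(\frac{2\alpha}{e}\right)^{\frac{\alpha}{\alpha+1}}\left(\frac{T}{n}\right)^{\frac{1}{\alpha+1}}$ and $c=n-m$. Read the first $m$ arms of the stream. Choose $2c$ of these arms uniformly at random, $s_1,\dots,s_{2c}$ (in uniformly random order). For $i=1,\dots,c$: pull $s_{2i-1}$ and $s_{2i}$ each $L$ times, compute their empirical means, and discard the one with the smaller empirical mean. Then read the remaining $c$ arms of the stream, and run UCB on the $m$ arms in memory for all remaining rounds. *)

theory Defs
  imports "HOL-Probability.Probability"
begin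

text \<open>Arms are indexed 0,...,n-1 in stream order; mu i is the Bernoulli mean of arm i.\<close>

definition gap :: "(nat \<Rightarrow> real) \<Rightarrow> nat \<Rightarrow> nat \<Rightarrow> real" where
  "gap mu n i = Max (mu ` {..<n}) - mu i"

definition Lparam :: "real \<Rightarrow> nat \<Rightarrow> nat \<Rightarrow> real" where
  "Lparam \<alpha> T n = (2 * \<alpha> / exp 1) powr (\<alpha> / (\<alpha> + 1)) * (real T / real n) powr (1 / (\<alpha> + 1))"

definition Lpulls :: "real \<Rightarrow> nat \<Rightarrow> nat \<Rightarrow> nat" where
  "Lpulls \<alpha> T n = nat \<lceil>Lparam \<alpha> T n\<rceil>"

definition selections :: "nat \<Rightarrow> nat \<Rightarrow> nat list set" where
  "selections m c = {xs. distinct xs \<and> set xs \<subseteq> {..<m} \<and> length xs = 2 * c}"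

text \<open>Duels on consecutive pairs (s_1,s_2),(s_3,s_4),...: each arm pulled L times, so its
  reward sum is Binomial(L, mu); the arm with smaller empirical mean is discarded.
  On a tie, tb a b = True means that a is kept (b discarded).\<close>
fun duel_losers :: "(nat \<Rightarrow> real) \<Rightarrow> nat \<Rightarrow> (nat \<Rightarrow> nat \<Rightarrow> bool) \<Rightarrow> nat list \<Rightarrow> nat set pmf" where
  "duel_losers mu L tb (a # b # rest) =
     binomial_pmf L (mu a) \<bind> (\<lambda>X. binomial_pmf L (mu b) \<bind> (\<lambda>Y.
     duel_losers mu L tb rest \<bind> (\<lambda>D.
     return_pmf (insert
       (if real X / real L < real Y / real L then a
        else if real Y / real L < real X / real L then b
        else if tb a b then b else a) D))))"
| "duel_losers mu L tb _ = return_pmf {}"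

definition phase1_regret :: "(nat \<Rightarrow> real) \<Rightarrow> nat \<Rightarrow> nat \<Rightarrow> nat \<Rightarrow> nat list \<Rightarrow> real" where
  "phase1_regret mu n L T s = sum_list (map (gap mu n) (take T (concat (map (\<lambda>a. replicate L a) s))))"

text \<open>Black-box UCB: N S h k is the expected number of pulls of arm k when UCB is run on the
  arm set S for h rounds.\<close>
definition ucb_blackbox :: "(nat \<Rightarrow> real) \<Rightarrow> nat \<Rightarrow> (nat set \<Rightarrow> nat \<Rightarrow> nat \<Rightarrow> real) \<Rightarrow> bool" where
  "ucb_blackbox mu n N \<longleftrightarrow>
     (\<forall>S h. S \<subseteq> {..<n} \<and> S \<noteq> {} \<longrightarrow>
        (\<forall>k\<in>S. 0 \<le> N S h k) \<and> (\<Sum>k\<in>S. N S h k) = real h \<and>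
        (\<forall>k\<in>S. Max (mu ` S) - mu k > 0 \<longrightarrow>
            N S h k \<le> 8 * ln (real h) / (Max (mu ` S) - mu k)\<^sup>2))"

definition alarge_regret ::
  "(nat \<Rightarrow> real) \<Rightarrow> nat \<Rightarrow> nat \<Rightarrow> real \<Rightarrow> (nat set \<Rightarrow> nat \<Rightarrow> nat \<Rightarrow> real) \<Rightarrow> (nat \<Rightarrow> nat \<Rightarrow> bool) \<Rightarrow> nat \<Rightarrow> real" where
  "alarge_regret mu n m \<alpha> N tb T =
     (let c = n - m; L = Lpulls \<alpha> T n in
      measure_pmf.expectation
        (pmf_of_set (selections m c) \<bind> (\<lambda>s. duel_losers mu L tb s \<bind> (\<lambda>D.
           return_pmf (phase1_regret mu n L T s +
             (\<Sum>k\<in>{..<n} - D. gap mu n k * N ({..<n} - D) (T - 2 * c * L) k)))))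
        (\<lambda>x. x))"

end

theory Submission
  imports Defs "HOL-Real_Asymp.Real_Asymp"
begin


lemma prob_bind_le:
  assumes "\<And>x. x \<in> set_pmf M \<Longrightarrow> measure_pmf.prob (N x) X \<le> e"
  shows "measure_pmf.prob (bind_pmf M N) X \<le> e"
proof -
  obtain x0 where x0: "x0 \<in> set_pmf M" using set_pmf_not_empty by fast
  have e0: "0 \<le> e" using assms[OF x0] measure_nonneg order_trans by blast
  have "emeasure (bind_pmf M N) X = (\<integral>\<^sup>+x. emeasure (N x) X \<partial>M)" by simp
  also have "\<dots> \<le> (\<integral>\<^sup>+x. ennreal e \<partial>M)"
    apply (rule nn_integral_mono_AE)
    apply (rule AE_pmfI)
    using assms by (simp add: measure_pmf.emeasure_eq_measure ennreal_leI)
  also have "\<dots> = ennreal e" by simp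
  finally show ?thesis using e0
    by (simp add: measure_pmf.emeasure_eq_measure)
qed

lemma pair_union:
  "measure_pmf.prob (pair_pmf A B) {z. fst z \<in> S \<or> snd z \<in> S'} \<le>
    measure_pmf.prob A S + measure_pmf.prob B S'"
proof -
  have "{z. fst z \<in> S \<or> snd z \<in> S'} = fst -` S \<union> snd -` S'" by auto
  hence "measure_pmf.prob (pair_pmf A B) {z. fst z \<in> S \<or> snd z \<in> S'} \<le>
     measure_pmf.prob (pair_pmf A B) (fst -` S) + measure_pmf.prob (pair_pmf A B) (snd -` S')"
    by (simp add: measure_Un_le)
  also have "measure_pmf.prob (pair_pmf A B) (fst -` S) = measure_pmf.prob A S"
    by (metis measure_map_pmf map_fst_pair_pmf)
  also have "measure_pmf.prob (pair_pmf A B) (snd -` S') = measure_pmf.prob B S'"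
    by (metis measure_map_pmf map_snd_pair_pmf)
  finally show ?thesis .
qed

lemma duel_bound:
  assumes p: "p \<in> {0..1}" and q: "q \<in> {0..1}" and d: "0 < D" "D \<le> p - q" and L: "L > 0"
  shows "measure_pmf.prob (pair_pmf (binomial_pmf L p) (binomial_pmf L q))
           {z. real (fst z) / real L \<le> real (snd z) / real L} \<le> 2 * exp (- (real L * D\<^sup>2 / 2))"
    and "measure_pmf.prob (pair_pmf (binomial_pmf L q) (binomial_pmf L p))
           {z. real (snd z) / real L \<le> real (fst z) / real L} \<le> 2 * exp (- (real L * D\<^sup>2 / 2))"
proof -
  define e where "e = (p - q) / 2"
  have e0: "0 \<le> e" using d by (simp add: e_def)
  have h1: "measure_pmf.prob (binomial_pmf L p) {x. real x / real L \<le> p - e} \<le> exp (- (real L * D\<^sup>2 / 2))"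
  proof -
    have "measure_pmf.prob (binomial_pmf L p) {x. real x / real L \<le> p - e} \<le> exp (real_of_int (- 2 * int L) * e\<^sup>2)"
      by (rule binomial_distribution.prob_le') (use p L e0 in \<open>simp_all add: binomial_distribution_def\<close>)
    also have "\<dots> \<le> exp (- (real L * D\<^sup>2 / 2))"
    proof -
      have "D\<^sup>2 \<le> (2*e)\<^sup>2" using d e0 by (intro power_mono) (auto simp: e_def)
      hence "real L * D\<^sup>2 \<le> real L * (4 * e\<^sup>2)" by (intro mult_left_mono) (auto simp: power2_eq_square)
      thus ?thesis by simp
    qed
    finally show ?thesis .
  qed
  have h2: "measure_pmf.prob (binomial_pmf L q) {x. real x / real L \<ge> q + e} \<le> exp (- (real L * D\<^sup>2 / 2))"
  proof -
    have "measure_pmf.prob (binomial_pmf L q) {x. real x / real L \<ge> q + e} \<le> exp (real_of_int (- 2 * int L) * e\<^sup>2)"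
      by (rule binomial_distribution.prob_ge') (use q L e0 in \<open>simp_all add: binomial_distribution_def\<close>)
    also have "\<dots> \<le> exp (- (real L * D\<^sup>2 / 2))"
    proof -
      have "D\<^sup>2 \<le> (2*e)\<^sup>2" using d e0 by (intro power_mono) (auto simp: e_def)
      hence "real L * D\<^sup>2 \<le> real L * (4 * e\<^sup>2)" by (intro mult_left_mono) (auto simp: power2_eq_square)
      thus ?thesis by simp
    qed
    finally show ?thesis .
  qed
  have ee: "p - e = q + e" by (simp add: e_def field_simps)
  show "measure_pmf.prob (pair_pmf (binomial_pmf L p) (binomial_pmf L q))
           {z. real (fst z) / real L \<le> real (snd z) / real L} \<le> 2 * exp (- (real L * D\<^sup>2 / 2))"
  proof -
    have "measure_pmf.prob (pair_pmf (binomial_pmf L p) (binomial_pmf L q))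
           {z. real (fst z) / real L \<le> real (snd z) / real L} \<le>
          measure_pmf.prob (pair_pmf (binomial_pmf L p) (binomial_pmf L q))
           {z. fst z \<in> {x. real x / real L \<le> p - e} \<or> snd z \<in> {x. real x / real L \<ge> q + e}}"
      using ee by (intro measure_pmf.finite_measure_mono) auto
    also have "\<dots> \<le> measure_pmf.prob (binomial_pmf L p) {x. real x / real L \<le> p - e} + measure_pmf.prob (binomial_pmf L q) {x. real x / real L \<ge> q + e}" by (rule pair_union)
    finally show ?thesis using h1 h2 by simp
  qed
  show "measure_pmf.prob (pair_pmf (binomial_pmf L q) (binomial_pmf L p))
           {z. real (snd z) / real L \<le> real (fst z) / real L} \<le> 2 * exp (- (real L * D\<^sup>2 / 2))"
  proof -
    have "measure_pmf.prob (pair_pmf (binomial_pmf L q) (binomial_pmf L p))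
           {z. real (snd z) / real L \<le> real (fst z) / real L} \<le>
          measure_pmf.prob (pair_pmf (binomial_pmf L q) (binomial_pmf L p))
           {z. fst z \<in> {x. real x / real L \<ge> q + e} \<or> snd z \<in> {x. real x / real L \<le> p - e}}"
      using ee by (intro measure_pmf.finite_measure_mono) auto
    also have "\<dots> \<le> measure_pmf.prob (binomial_pmf L q) {x. real x / real L \<ge> q + e} + measure_pmf.prob (binomial_pmf L p) {x. real x / real L \<le> p - e}" by (rule pair_union)
    finally show ?thesis using h1 h2 by simp
  qed
qed



lemma dl_support:
  "D \<in> set_pmf (duel_losers mu L tb xs) \<Longrightarrow> D \<subseteq> set xs \<and> card D \<le> length xs div 2"
proof (induction mu L tb xs arbitrary: D rule: duel_losers.induct)
  case (1 mu L tb a b rest)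
  then obtain X Y D' where X: "X \<in> set_pmf (binomial_pmf L (mu a))" and Y: "Y \<in> set_pmf (binomial_pmf L (mu b))"
    and D': "D' \<in> set_pmf (duel_losers mu L tb rest)"
    and D: "D = insert (if real X / real L < real Y / real L then a
        else if real Y / real L < real X / real L then b
        else if tb a b then b else a) D'"
    by auto
  from "1.IH"[OF X Y D'] have h: "D' \<subseteq> set rest" "card D' \<le> length rest div 2" by auto
  have "finite D'" using h(1) finite_subset by blast
  hence "card D \<le> card D' + 1" unfolding D by (simp add: card_insert_if)
  with h show ?case unfolding D by auto
qed auto

lemma dl_map:
  "duel_losers mu L tb (a # b # rest) =
    map_pmf (\<lambda>((X,Y),D). insert (if real X / real L < real Y / real L then a
        else if real Y / real L < real X / real L then b
        else if tb a b then b else a) D)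
     (pair_pmf (pair_pmf (binomial_pmf L (mu a)) (binomial_pmf L (mu b))) (duel_losers mu L tb rest))"
  by (simp add: pair_pmf_def map_pmf_def bind_assoc_pmf bind_return_pmf)



lemma dl_prob:
  assumes "distinct xs" "set xs \<subseteq> {..<n}" "L > 0" "bb < n" "\<forall>j<n. mu j \<in> {0..1}"
    "\<forall>j<n. j \<noteq> bb \<longrightarrow> Dl \<le> mu bb - mu j" "Dl > 0"
  shows "measure_pmf.prob (duel_losers mu L tb xs) {D. bb \<in> D} \<le> 2 * exp (- (real L * Dl\<^sup>2 / 2))"
  using assms
proof (induction mu L tb xs rule: duel_losers.induct)
  case (1 mu L tb a b rest)
  define lo where "lo = (\<lambda>X Y. if real X / real L < real Y / real L then a
        else if real Y / real L < real X / real L then b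
        else if tb a b then b else a)"
  define P where "P = pair_pmf (pair_pmf (binomial_pmf L (mu a)) (binomial_pmf L (mu b))) (duel_losers mu L tb rest)"
  have eq: "duel_losers mu L tb (a # b # rest) = map_pmf (\<lambda>((X,Y),D). insert (lo X Y) D) P"
    unfolding lo_def P_def by (rule dl_map)
  have IH: "measure_pmf.prob (duel_losers mu L tb rest) {D. bb \<in> D} \<le> 2 * exp (- (real L * Dl\<^sup>2 / 2))"
  proof -
    obtain X0 where X0: "X0 \<in> set_pmf (binomial_pmf L (mu a))" using set_pmf_not_empty by fast
    obtain Y0 where Y0: "Y0 \<in> set_pmf (binomial_pmf L (mu b))" using set_pmf_not_empty by fast
    show ?thesis using "1.prems" by (intro "1.IH"[OF X0 Y0]) auto
  qed
  have pre: "(\<lambda>((X,Y),D). insert (lo X Y) D) -` {D. bb \<in> D} = {z. bb = lo (fst (fst z)) (snd (fst z)) \<or> bb \<in> snd z}"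
    by auto
  have ab: "a \<in> {..<n}" "b \<in> {..<n}" "a \<noteq> b" using "1.prems" by auto
  show ?case
  proof (cases "bb = a \<or> bb = b")
    case False
    hence "measure_pmf.prob (duel_losers mu L tb (a # b # rest)) {D. bb \<in> D}
        \<le> measure_pmf.prob P (snd -` {D. bb \<in> D})"
      unfolding eq measure_map_pmf pre
      by (intro measure_pmf.finite_measure_mono) (auto simp: lo_def)
    also have "\<dots> = measure_pmf.prob (duel_losers mu L tb rest) {D. bb \<in> D}"
      unfolding P_def by (metis measure_map_pmf map_snd_pair_pmf)
    finally show ?thesis using IH by simp
  next
    case True
    have nb: "bb \<notin> set rest" using "1.prems"(1) True by auto
    have "measure_pmf.prob (duel_losers mu L tb (a # b # rest)) {D. bb \<in> D}
        = measure_pmf.prob P ({z. bb = lo (fst (fst z)) (snd (fst z)) \<or> bb \<in> snd z} \<inter> set_pmf P)"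
      unfolding eq measure_map_pmf pre measure_Int_set_pmf ..
    also have "\<dots> \<le> measure_pmf.prob P (fst -` {z. bb = lo (fst z) (snd z)})"
      using nb dl_support[of _ mu L tb rest] unfolding P_def
      by (intro measure_pmf.finite_measure_mono) fastforce+
    also have "\<dots> = measure_pmf.prob (pair_pmf (binomial_pmf L (mu a)) (binomial_pmf L (mu b))) {z. bb = lo (fst z) (snd z)}"
      unfolding P_def by (metis measure_map_pmf map_fst_pair_pmf)
    also have "\<dots> \<le> 2 * exp (- (real L * Dl\<^sup>2 / 2))"
    proof (cases "bb = a")
      case True
      have "measure_pmf.prob (pair_pmf (binomial_pmf L (mu a)) (binomial_pmf L (mu b))) {z. bb = lo (fst z) (snd z)}
         \<le> measure_pmf.prob (pair_pmf (binomial_pmf L (mu a)) (binomial_pmf L (mu b)))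
           {z. real (fst z) / real L \<le> real (snd z) / real L}"
        using True ab by (intro measure_pmf.finite_measure_mono) (auto simp: lo_def split: if_splits)
      also have "\<dots> \<le> 2 * exp (- (real L * Dl\<^sup>2 / 2))"
        using "1.prems" ab True by (intro duel_bound(1)) auto
      finally show ?thesis .
    next
      case False
      hence bbb: "bb = b" using \<open>bb = a \<or> bb = b\<close> by auto
      have "measure_pmf.prob (pair_pmf (binomial_pmf L (mu a)) (binomial_pmf L (mu b))) {z. bb = lo (fst z) (snd z)}
         \<le> measure_pmf.prob (pair_pmf (binomial_pmf L (mu a)) (binomial_pmf L (mu b)))
           {z. real (snd z) / real L \<le> real (fst z) / real L}"
        using bbb ab by (intro measure_pmf.finite_measure_mono) (auto simp: lo_def split: if_splits)
      also have "\<dots> \<le> 2 * exp (- (real L * Dl\<^sup>2 / 2))"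
        using "1.prems" ab bbb by (intro duel_bound(2)) auto
      finally show ?thesis .
    qed
    finally show ?thesis .
  qed
qed auto



lemma sum_list_le_length:
  "(\<forall>x\<in>set xs. f x \<le> (1::real)) \<Longrightarrow> sum_list (map f xs) \<le> real (length xs)"
  by (induction xs) auto

lemma pointwise:
  fixes mu :: "nat \<Rightarrow> real"
  assumes ucb: "ucb_blackbox mu n N"
    and gap01: "\<forall>i<n. 0 \<le> gap mu n i \<and> gap mu n i \<le> 1"
    and best: "bb < n" "Max (mu ` {..<n}) = mu bb"
    and s: "set s \<subseteq> {..<n}" "length s = 2*c"
    and D: "D \<subseteq> set s" "card D \<le> c" "c < n"
    and T: "T \<ge> 1"
  shows "phase1_regret mu n L T s + (\<Sum>k\<in>{..<n}-D. gap mu n k * N ({..<n}-D) (T - 2*c*L) k)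
     \<le> real (2*c*L) + 8 * ln (real T) * (\<Sum>i\<in>{i. i<n \<and> gap mu n i>0}. 1 / gap mu n i)
        + (if bb \<in> D then real T else 0)"
proof -
  define xs where "xs = take T (concat (map (\<lambda>a. replicate L a) s))"
  have "set xs \<subseteq> set s" unfolding xs_def using set_take_subset by fastforce
  hence "\<forall>x\<in>set xs. gap mu n x \<le> 1" using s gap01 by auto
  hence "phase1_regret mu n L T s \<le> real (length xs)"
    unfolding phase1_regret_def xs_def[symmetric] by (rule sum_list_le_length)
  also have "length xs \<le> 2*c*L"
  proof -
    have "length (concat (map (\<lambda>a. replicate L a) s)) = length s * L"
      by (simp add: length_concat o_def sum_list_triv)
    thus ?thesis unfolding xs_def using s(2) by simp
  qed
  finally have ph: "phase1_regret mu n L T s \<le> real (2*c*L)" by simp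
  define S where "S = {..<n} - D"
  define h where "h = T - 2*c*L"
  have finD: "finite D" using D(1) finite_subset by blast
  have "card {..<n} - card D \<le> card S" unfolding S_def by (rule diff_card_le_card_Diff[OF finD])
  hence "card S > 0" using D by simp
  hence Sne: "S \<noteq> {}" by auto
  have Ssub: "S \<subseteq> {..<n}" unfolding S_def by auto
  have finS: "finite S" using Ssub finite_subset by blast
  from ucb Ssub Sne have N0: "\<forall>k\<in>S. 0 \<le> N S h k" and Nsum: "(\<Sum>k\<in>S. N S h k) = real h"
    and Nb: "\<forall>k\<in>S. Max (mu ` S) - mu k > 0 \<longrightarrow> N S h k \<le> 8 * ln (real h) / (Max (mu ` S) - mu k)\<^sup>2"
    unfolding ucb_blackbox_def by blast+
  have lnT: "0 \<le> ln (real T)" using T by simp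
  have lnh: "ln (real h) \<le> ln (real T)"
  proof (cases "h = 0")
    case True thus ?thesis using lnT by simp
  next
    case False
    have "real h \<le> real T" unfolding h_def by simp
    thus ?thesis using False by (subst ln_le_cancel_iff) auto
  qed
  have ucbpart: "(\<Sum>k\<in>S. gap mu n k * N S h k)
     \<le> 8 * ln (real T) * (\<Sum>i\<in>{i. i<n \<and> gap mu n i>0}. 1 / gap mu n i) + (if bb \<in> D then real T else 0)"
  proof (cases "bb \<in> D")
    case True
    have "(\<Sum>k\<in>S. gap mu n k * N S h k) \<le> (\<Sum>k\<in>S. N S h k)"
    proof (rule sum_mono)
      fix k assume k: "k \<in> S"
      thus "gap mu n k * N S h k \<le> N S h k"
        using N0 gap01 Ssub by (intro mult_left_le_one_le) auto
    qed
    also have "\<dots> \<le> real T" using Nsum unfolding h_def by simp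
    finally have A1: "(\<Sum>k\<in>S. gap mu n k * N S h k) \<le> real T" .
    have "0 \<le> (\<Sum>i\<in>{i. i<n \<and> gap mu n i>0}. 1 / gap mu n i)" by (intro sum_nonneg) auto
    hence "0 \<le> 8 * ln (real T) * (\<Sum>i\<in>{i. i<n \<and> gap mu n i>0}. 1 / gap mu n i)" using lnT by simp
    thus ?thesis using A1 True by simp
  next
    case False
    have bS: "bb \<in> S" using False best unfolding S_def by auto
    have MS: "Max (mu ` S) = mu bb"
    proof (rule Max_eqI)
      show "finite (mu ` S)" using finS by simp
      show "mu bb \<in> mu ` S" using bS by simp
      fix y assume "y \<in> mu ` S"
      then obtain k where "k \<in> S" "y = mu k" by auto
      thus "y \<le> mu bb" using Ssub best(2) by (metis Max_ge finite_imageI finite_lessThan image_eqI subsetD)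
    qed
    define F where "F = (\<lambda>k. if gap mu n k > 0 then 8 * ln (real T) / gap mu n k else 0)"
    have gapeq: "gap mu n k = mu bb - mu k" for k unfolding gap_def best(2) ..
    have "(\<Sum>k\<in>S. gap mu n k * N S h k) \<le> (\<Sum>k\<in>S. F k)"
    proof (rule sum_mono)
      fix k assume k: "k \<in> S"
      show "gap mu n k * N S h k \<le> F k"
      proof (cases "gap mu n k > 0")
        case True
        have "N S h k \<le> 8 * ln (real h) / (gap mu n k)\<^sup>2"
          using Nb k True MS gapeq by auto
        hence "gap mu n k * N S h k \<le> gap mu n k * (8 * ln (real h) / (gap mu n k)\<^sup>2)"
          using True by (intro mult_left_mono) auto
        also have "\<dots> = 8 * ln (real h) / gap mu n k" using True by (simp add: power2_eq_square)
        also have "\<dots> \<le> 8 * ln (real T) / gap mu n k" using True lnh by (intro divide_right_mono) auto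
        finally show ?thesis using True unfolding F_def by simp
      next
        case False
        hence "gap mu n k = 0" using gap01 k Ssub by force
        thus ?thesis unfolding F_def by simp
      qed
    qed
    also have "\<dots> \<le> (\<Sum>k\<in>{..<n}. F k)"
      using Ssub lnT by (intro sum_mono2) (auto simp: F_def)
    also have "\<dots> = (\<Sum>k\<in>{i. i<n \<and> gap mu n i>0}. 8 * ln (real T) / gap mu n k)"
    proof -
      have "{i. i<n \<and> gap mu n i>0} = {i\<in>{..<n}. gap mu n i>0}" by auto
      thus ?thesis unfolding F_def by (simp add: sum.inter_filter[symmetric])
    qed
    also have "\<dots> = 8 * ln (real T) * (\<Sum>i\<in>{i. i<n \<and> gap mu n i>0}. 1 / gap mu n i)"
      by (simp add: sum_distrib_left)
    finally show ?thesis using False by simp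
  qed
  show ?thesis using ph ucbpart unfolding S_def h_def by linarith
qed



lemma expect_bound:
  fixes V :: "'a \<Rightarrow> 'b \<Rightarrow> real"
  assumes fin: "finite Sel" "Sel \<noteq> {}"
    and hV: "\<And>s D. s \<in> Sel \<Longrightarrow> D \<in> set_pmf (K s) \<Longrightarrow> V s D \<le> A + T' * indicator E D"
    and hP: "\<And>s. s \<in> Sel \<Longrightarrow> measure_pmf.prob (K s) E \<le> e"
    and A0: "A \<ge> 0" and T0: "T' \<ge> 0"
  shows "measure_pmf.expectation (pmf_of_set Sel \<bind> (\<lambda>s. K s \<bind> (\<lambda>D. return_pmf (V s D)))) (\<lambda>x. x)
         \<le> A + T' * e"
proof -
  define W where "W = pmf_of_set Sel \<bind> (\<lambda>s. map_pmf (Pair s) (K s))"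
  have eq: "pmf_of_set Sel \<bind> (\<lambda>s. K s \<bind> (\<lambda>D. return_pmf (V s D))) = map_pmf (\<lambda>z. V (fst z) (snd z)) W"
    unfolding W_def by (simp add: map_pmf_def bind_assoc_pmf bind_return_pmf)
  have "measure_pmf.expectation (map_pmf (\<lambda>z. V (fst z) (snd z)) W) (\<lambda>x. x)
      = measure_pmf.expectation W (\<lambda>z. V (fst z) (snd z))" by simp
  also have "\<dots> \<le> measure_pmf.expectation W (\<lambda>z. A + T' * indicator E (snd z))"
  proof (rule integral_mono_AE')
    show "integrable (measure_pmf W) (\<lambda>z. A + T' * indicator E (snd z))"
      by (intro measure_pmf.integrable_const_bound[where B="\<bar>A\<bar> + \<bar>T'\<bar>"]) (auto simp: indicator_def)
    show "AE x in measure_pmf W. V (fst x) (snd x) \<le> A + T' * indicator E (snd x)"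
      using hV fin by (intro AE_pmfI) (auto simp: W_def)
    show "AE x in measure_pmf W. 0 \<le> A + T' * indicator E (snd x)"
      using A0 T0 by (intro AE_pmfI) (auto simp: indicator_def)
  qed
  also have "\<dots> = A + T' * measure_pmf.prob W (snd -` E)"
  proof -
    have "measure_pmf.expectation W (\<lambda>z. A + T' * indicator E (snd z))
        = measure_pmf.expectation W (\<lambda>z. A + T' * indicator (snd -` E) z)"
      by (simp add: indicator_def)
    also have "\<dots> = A + T' * measure_pmf.prob W (snd -` E)"
      by (subst Bochner_Integration.integral_add) (auto simp: measure_pmf.emeasure_eq_measure)
    finally show ?thesis .
  qed
  also have "measure_pmf.prob W (snd -` E) \<le> e"
    unfolding W_def
  proof (rule prob_bind_le)
    fix s assume "s \<in> set_pmf (pmf_of_set Sel)"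
    hence s: "s \<in> Sel" using fin by simp
    have "measure_pmf.prob (map_pmf (Pair s) (K s)) (snd -` E) = measure_pmf.prob (K s) E"
      by (simp add: vimage_def)
    thus "measure_pmf.prob (map_pmf (Pair s) (K s)) (snd -` E) \<le> e" using hP[OF s] by simp
  qed
  finally show ?thesis unfolding eq using T0 by (simp add: mult_left_mono)
qed



lemma final_arith:
  fixes Lp c n Sig G lnT Tx Dl L :: real
  assumes "Lp \<ge> 1" "c \<ge> 1" "n > 0" "Sig \<ge> G" "G \<ge> 0" "2 * Sig \<ge> n" "lnT \<le> Lp / n"
    "Tx * exp (-(Lp * Dl\<^sup>2 / 2)) \<le> 1" "L \<le> Lp + 1" "L \<ge> Lp" "Tx \<ge> 0"
  shows "2*c*L + 8*lnT*G + Tx*(2*exp(-(L*Dl\<^sup>2/2))) \<le> 24*(c*Lp/n*Sig)"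
proof -
  have q: "c*Lp/n*Sig = c*Lp*(Sig/n)" by simp
  have s2: "Sig / n \<ge> 1/2" using assms by (simp add: field_simps)
  have cl: "c * Lp \<ge> 1" using mult_mono[of 1 c 1 Lp] assms by simp
  have t1: "2*c*L \<le> 8*(c*Lp*(Sig/n))"
  proof -
    have "2*c*L \<le> 2*c*(Lp+1)" using assms by (intro mult_left_mono) auto
    also have "\<dots> \<le> 4*(c*Lp)" using assms cl by (simp add: algebra_simps)
    also have "\<dots> \<le> 8*(c*Lp*(1/2))" by simp
    also have "\<dots> \<le> 8*(c*Lp*(Sig/n))" using s2 assms by (intro mult_left_mono) auto
    finally show ?thesis .
  qed
  have t2: "8*lnT*G \<le> 8*(c*Lp*(Sig/n))"
  proof -
    have "lnT * G \<le> (Lp/n) * G" using assms by (intro mult_right_mono) auto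
    also have "\<dots> \<le> (Lp/n) * Sig" using assms by (intro mult_left_mono) auto
    also have "\<dots> = 1 * (Lp * (Sig/n))" by simp
    also have "\<dots> \<le> c * (Lp * (Sig/n))" using assms s2 by (intro mult_right_mono) auto
    finally show ?thesis by simp
  qed
  have t3: "Tx*(2*exp(-(L*Dl\<^sup>2/2))) \<le> 8*(c*Lp*(Sig/n))"
  proof -
    have "Lp * Dl\<^sup>2 \<le> L * Dl\<^sup>2" using assms by (intro mult_right_mono) auto
    hence "exp(-(L*Dl\<^sup>2/2)) \<le> exp (-(Lp * Dl\<^sup>2 / 2))" by simp
    hence "Tx*(2*exp(-(L*Dl\<^sup>2/2))) \<le> 2 * (Tx * exp (-(Lp * Dl\<^sup>2 / 2)))"
      using assms by (simp add: mult_left_mono)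
    also have "\<dots> \<le> 2" using assms by simp
    also have "\<dots> \<le> 8*(c*Lp*(1/2))" using cl by (simp add: mult.commute)
    also have "\<dots> \<le> 8*(c*Lp*(Sig/n))" using s2 cl by (intro mult_left_mono) auto
    finally show ?thesis .
  qed
  show ?thesis using t1 t2 t3 q by linarith
qed


lemma asymp_conds:
  fixes K0 b nn Dl :: real
  assumes "K0 > 0" "b > 0" "nn > 0" "Dl > 0"
  shows "eventually (\<lambda>x. 1 \<le> x \<and> 1 \<le> K0 * (x / nn) powr b \<and> ln x \<le> K0 * (x / nn) powr b / nn
      \<and> x * exp (-(K0 * (x / nn) powr b * Dl\<^sup>2 / 2)) \<le> 1) at_top"
  using assms by (intro eventually_conj; real_asymp)



theorem theorem3p1:
  shows "\<exists>C>0. \<forall>(\<alpha>::real) (n::nat) (m::nat) (mu::nat \<Rightarrow> real)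
            (N::nat set \<Rightarrow> nat \<Rightarrow> nat \<Rightarrow> real) (tb::nat \<Rightarrow> nat \<Rightarrow> bool).
     1 \<le> \<alpha> \<and> 2 * real n \<le> 3 * real m \<and> m < n \<and>
     (\<forall>i<n. 0 \<le> mu i \<and> mu i \<le> 1) \<and>
     (\<exists>!i. i < n \<and> (\<forall>j<n. mu j \<le> mu i)) \<and>
     ucb_blackbox mu n N
     \<longrightarrow> (\<exists>T0. \<forall>T\<ge>T0.
           alarge_regret mu n m \<alpha> N tb T \<le>
             C * ((2 * \<alpha> / exp 1) powr (\<alpha> / (\<alpha> + 1)) * real (n - m) * real T powr (1 / (\<alpha> + 1))
                  / real n powr (1 + 1 / (\<alpha> + 1))
                  * (\<Sum>i\<in>{i. i < n \<and> gap mu n i > 0}. gap mu n i powr (1 - 2 * \<alpha>))))"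
proof (rule exI[of _ 24], intro conjI allI impI)
  fix \<alpha> :: real and n m :: nat and mu :: "nat \<Rightarrow> real" and N :: "nat set \<Rightarrow> nat \<Rightarrow> nat \<Rightarrow> real"
    and tb :: "nat \<Rightarrow> nat \<Rightarrow> bool"
  assume H: "1 \<le> \<alpha> \<and> 2 * real n \<le> 3 * real m \<and> m < n \<and>
     (\<forall>i<n. 0 \<le> mu i \<and> mu i \<le> 1) \<and>
     (\<exists>!i. i < n \<and> (\<forall>j<n. mu j \<le> mu i)) \<and> ucb_blackbox mu n N"
  hence al: "1 \<le> \<alpha>" and nm: "2 * real n \<le> 3 * real m" "m < n" and mu01: "\<forall>i<n. 0 \<le> mu i \<and> mu i \<le> 1"
    and uq: "\<exists>!i. i < n \<and> (\<forall>j<n. mu j \<le> mu i)" and ucb: "ucb_blackbox mu n N" by auto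
  define c where "c = n - m"
  have c1: "c \<ge> 1" "c < n" "2 * c \<le> m" using nm unfolding c_def by auto
  have n2: "n \<ge> 2" using c1 by linarith
  from uq obtain bb where bb: "bb < n" "\<forall>j<n. mu j \<le> mu bb"
    and bbu: "\<And>i. i < n \<Longrightarrow> (\<forall>j<n. mu j \<le> mu i) \<Longrightarrow> i = bb" by blast
  have Mx: "Max (mu ` {..<n}) = mu bb"
    using bb by (intro Max_eqI) auto
  have gapeq: "gap mu n i = mu bb - mu i" for i unfolding gap_def Mx ..
  have gap01: "\<forall>i<n. 0 \<le> gap mu n i \<and> gap mu n i \<le> 1"
  proof (intro allI impI)
    fix i assume i: "i < n"
    hence "mu i \<le> mu bb" "mu bb \<le> 1" "0 \<le> mu i" using bb mu01 by auto
    thus "0 \<le> gap mu n i \<and> gap mu n i \<le> 1" unfolding gapeq by linarith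
  qed
  have gpos: "gap mu n i > 0" if "i < n" "i \<noteq> bb" for i
  proof (rule ccontr)
    assume "\<not> gap mu n i > 0"
    hence "mu bb \<le> mu i" unfolding gapeq by simp
    hence "\<forall>j<n. mu j \<le> mu i" using bb by force
    thus False using bbu that by blast
  qed
  define I where "I = {i. i < n \<and> gap mu n i > 0}"
  have Ieq: "I = {..<n} - {bb}" using gpos unfolding I_def gapeq by auto
  have finI: "finite I" unfolding Ieq by simp
  have cardI: "card I = n - 1" unfolding Ieq using bb by simp
  have Ine: "I \<noteq> {}" using cardI n2 by auto
  define Dl where "Dl = Min (gap mu n ` I)"
  have Dl0: "Dl > 0" unfolding Dl_def using finI Ine by (subst Min_gr_iff) (auto simp: I_def)
  have Dlj: "\<forall>j<n. j \<noteq> bb \<longrightarrow> Dl \<le> mu bb - mu j"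
  proof (intro allI impI)
    fix j assume "j < n" "j \<noteq> bb"
    hence "j \<in> I" unfolding Ieq by auto
    thus "Dl \<le> mu bb - mu j" unfolding Dl_def gapeq[symmetric] using finI by simp
  qed
  define G where "G = (\<Sum>i\<in>I. 1 / gap mu n i)"
  define Sig where "Sig = (\<Sum>i\<in>I. gap mu n i powr (1 - 2 * \<alpha>))"
  have G0: "G \<ge> 0" unfolding G_def I_def by (intro sum_nonneg) auto
  have SigG: "Sig \<ge> G" unfolding Sig_def G_def
  proof (rule sum_mono)
    fix i assume i: "i \<in> I"
    hence g: "0 < gap mu n i" "gap mu n i \<le> 1" using gap01 unfolding I_def by auto
    have "1 / gap mu n i = gap mu n i powr (-1)" using g by (simp add: powr_minus_divide)
    also have "\<dots> \<le> gap mu n i powr (1 - 2 * \<alpha>)" using g al by (intro powr_mono') auto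
    finally show "1 / gap mu n i \<le> gap mu n i powr (1 - 2 * \<alpha>)" .
  qed
  have Sign: "Sig \<ge> real (n - 1)"
  proof -
    have "real (n - 1) = (\<Sum>i\<in>I. 1)" using cardI by simp
    also have "\<dots> \<le> Sig" unfolding Sig_def
    proof (rule sum_mono)
      fix i assume i: "i \<in> I"
      hence g: "0 < gap mu n i" "gap mu n i \<le> 1" using gap01 unfolding I_def by auto
      have "gap mu n i powr 0 \<le> gap mu n i powr (1 - 2 * \<alpha>)" using g al by (intro powr_mono') auto
      thus "1 \<le> gap mu n i powr (1 - 2 * \<alpha>)" using g by simp
    qed
    finally show ?thesis .
  qed
  have Sig2: "2 * Sig \<ge> real n" using Sign n2 by linarith
  define K0 where "K0 = (2 * \<alpha> / exp 1) powr (\<alpha> / (\<alpha> + 1))"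
  define b where "b = 1 / (\<alpha> + 1)"
  have K00: "K0 > 0" unfolding K0_def using al by simp
  have b0: "b > 0" unfolding b_def using al by simp
  have Lp: "Lparam \<alpha> T n = K0 * (real T / real n) powr b" for T
    unfolding Lparam_def K0_def b_def ..
  have ev: "eventually (\<lambda>x. 1 \<le> x \<and> 1 \<le> K0 * (x / real n) powr b \<and> ln x \<le> K0 * (x / real n) powr b / real n
      \<and> x * exp (-(K0 * (x / real n) powr b * Dl\<^sup>2 / 2)) \<le> 1) at_top"
    using K00 b0 n2 Dl0 by (intro asymp_conds) auto
  have "eventually (\<lambda>T. 1 \<le> real T \<and> 1 \<le> K0 * (real T / real n) powr b \<and> ln (real T) \<le> K0 * (real T / real n) powr b / real n
      \<and> real T * exp (-(K0 * (real T / real n) powr b * Dl\<^sup>2 / 2)) \<le> 1) sequentially"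
    by (rule eventually_compose_filterlim[OF ev filterlim_real_sequentially])
  then obtain T0 where T0: "\<And>T. T \<ge> T0 \<Longrightarrow> 1 \<le> real T \<and> 1 \<le> K0 * (real T / real n) powr b \<and> ln (real T) \<le> K0 * (real T / real n) powr b / real n
      \<and> real T * exp (-(K0 * (real T / real n) powr b * Dl\<^sup>2 / 2)) \<le> 1"
    unfolding eventually_sequentially by blast
  show "\<exists>T0. \<forall>T\<ge>T0.
           alarge_regret mu n m \<alpha> N tb T \<le>
             24 * ((2 * \<alpha> / exp 1) powr (\<alpha> / (\<alpha> + 1)) * real (n - m) * real T powr (1 / (\<alpha> + 1))
                  / real n powr (1 + 1 / (\<alpha> + 1))
                  * (\<Sum>i\<in>{i. i < n \<and> gap mu n i > 0}. gap mu n i powr (1 - 2 * \<alpha>)))"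
  proof (rule exI[of _ T0], intro allI impI)
    fix T assume "T \<ge> T0"
    note TT = T0[OF this]
    define Lr where "Lr = K0 * (real T / real n) powr b"
    define L where "L = Lpulls \<alpha> T n"
    have Lr1: "Lr \<ge> 1" using TT unfolding Lr_def by simp
    have LL: "real L \<ge> Lr" "real L \<le> Lr + 1"
      unfolding L_def Lpulls_def Lp Lr_def[symmetric] using Lr1 by linarith+
    have L0: "L > 0" using LL Lr1 by linarith
    define Sel where "Sel = selections m c"
    have finSel: "finite Sel"
    proof -
      have "Sel \<subseteq> {xs. set xs \<subseteq> {..<m} \<and> length xs = 2 * c}" unfolding Sel_def selections_def by auto
      moreover have "finite {xs. set xs \<subseteq> {..<m} \<and> length xs = 2 * c}"
        by (rule finite_lists_length_eq) simp
      ultimately show ?thesis by (rule finite_subset)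
    qed
    have Selne: "Sel \<noteq> {}"
    proof -
      have "[0..<2*c] \<in> Sel" unfolding Sel_def selections_def using c1 by auto
      thus ?thesis by auto
    qed
    have selp: "distinct s \<and> set s \<subseteq> {..<n} \<and> length s = 2 * c" if "s \<in> Sel" for s
      using that nm unfolding Sel_def selections_def by auto
    have T1: "real T \<ge> 1" using TT by simp
    hence T1': "T \<ge> 1" by simp
    have lnT0: "ln (real T) \<ge> 0" using T1 by simp
    have "alarge_regret mu n m \<alpha> N tb T \<le>
         (2 * real c * real L + 8 * ln (real T) * G) + real T * (2 * exp (- (real L * Dl\<^sup>2 / 2)))"
      unfolding alarge_regret_def Let_def c_def[symmetric] L_def[symmetric] Sel_def[symmetric]
    proof (rule expect_bound[where E="{D. bb \<in> D}"])
      show "finite Sel" "Sel \<noteq> {}" by (fact finSel, fact Selne)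
      show "0 \<le> 2 * real c * real L + 8 * ln (real T) * G" using lnT0 G0 by simp
      show "0 \<le> real T" by simp
    next
      fix s assume s: "s \<in> Sel"
      show "measure_pmf.prob (duel_losers mu L tb s) {D. bb \<in> D} \<le> 2 * exp (- (real L * Dl\<^sup>2 / 2))"
        using selp[OF s] L0 bb mu01 Dlj Dl0 by (intro dl_prob[where n=n]) auto
    next
      fix s D assume s: "s \<in> Sel" and D: "D \<in> set_pmf (duel_losers mu L tb s)"
      from dl_support[OF D] selp[OF s] have Ds: "D \<subseteq> set s" "card D \<le> c" by auto
      have "phase1_regret mu n L T s + (\<Sum>k\<in>{..<n}-D. gap mu n k * N ({..<n}-D) (T - 2*c*L) k)
         \<le> real (2*c*L) + 8 * ln (real T) * (\<Sum>i\<in>{i. i<n \<and> gap mu n i>0}. 1 / gap mu n i)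
            + (if bb \<in> D then real T else 0)"
        using selp[OF s] Ds c1 T1' by (intro pointwise[OF ucb gap01 bb(1) Mx]) auto
      thus "phase1_regret mu n L T s + (\<Sum>k\<in>{..<n}-D. gap mu n k * N ({..<n}-D) (T - 2*c*L) k)
         \<le> 2 * real c * real L + 8 * ln (real T) * G + real T * indicator {D. bb \<in> D} D"
        unfolding G_def I_def indicator_def by (cases "bb \<in> D") simp_all
    qed
    also have "\<dots> \<le> 24 * (real c * Lr / real n * Sig)"
    proof (rule final_arith)
      show "1 \<le> Lr" by (fact Lr1)
      show "1 \<le> real c" using c1 by simp
      show "0 < real n" using n2 by simp
      show "G \<le> Sig" by (fact SigG)
      show "0 \<le> G" by (fact G0)
      show "real n \<le> 2 * Sig" by (fact Sig2)
      show "ln (real T) \<le> Lr / real n" using TT unfolding Lr_def by simp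
      show "real T * exp (-(Lr * Dl\<^sup>2 / 2)) \<le> 1" using TT unfolding Lr_def by simp
      show "real L \<le> Lr + 1" "Lr \<le> real L" using LL by simp_all
      show "0 \<le> real T" by simp
    qed
    also have "real c * Lr / real n * Sig = K0 * real (n - m) * real T powr b / real n powr (1 + b) * Sig"
    proof -
      have "real n powr (1 + b) = real n * real n powr b" using n2 by (simp add: powr_add)
      thus ?thesis unfolding Lr_def c_def using n2 by (simp add: powr_divide field_simps)
    qed
    finally show "alarge_regret mu n m \<alpha> N tb T \<le>
             24 * ((2 * \<alpha> / exp 1) powr (\<alpha> / (\<alpha> + 1)) * real (n - m) * real T powr (1 / (\<alpha> + 1))
                  / real n powr (1 + 1 / (\<alpha> + 1))
                  * (\<Sum>i\<in>{i. i < n \<and> gap mu n i > 0}. gap mu n i powr (1 - 2 * \<alpha>)))"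
      unfolding K0_def b_def Sig_def I_def by simp
  qed
qed simp

end
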